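(* Let $A$ be a commutative ring with $1\ne0$ and let $D(A)$ be the set of all divisibilities on $A$. The constructible topology on $D(A)$ is compact. In particular, the spectral topology on $D(A)$ is quasi-compact.
   Context: A divisibility on $A$ is a binary relation $|\subseteq A\times A$ such that for all $a,b,c$: (1) $a|a$; (2) $a|b,\ b|c\Rightarrow a|c$; (3) $a|b,\ a|c\Rightarrow a|b-c$; (4) $a|b\Rightarrow ac|bc$; (5) $0\nmid1$. The spectral topology on $D(A)$ is generated by the sets $U(a,b)=\{|\in D(A);\ a\nmid b\}$, $a,b\in A$; the constructible topology is generated by the sets $U(a,b)$ together with their complements $V(a,b)=\{|\in D(A);\ a|b\}$. *)

theory Defs
  imports "HOL-Analysis.Analysis"
begin

text \<open>A divisibility on a commutative ring A, represented as a binary relation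
  (pairs (a,b) with a | b).\<close>
definition is_divisibility :: "('a::comm_ring_1 \<times> 'a) set \<Rightarrow> bool" where
  "is_divisibility R \<longleftrightarrow>
     (\<forall>a. (a, a) \<in> R) \<and>
     (\<forall>a b c. (a, b) \<in> R \<longrightarrow> (b, c) \<in> R \<longrightarrow> (a, c) \<in> R) \<and>
     (\<forall>a b c. (a, b) \<in> R \<longrightarrow> (a, c) \<in> R \<longrightarrow> (a, b - c) \<in> R) \<and>
     (\<forall>a b c. (a, b) \<in> R \<longrightarrow> (a * c, b * c) \<in> R) \<and>
     (0, 1) \<notin> R"

definition divisibilities :: "('a::comm_ring_1 \<times> 'a) set set" where
  "divisibilities = {R. is_divisibility R}"

definition Uset :: "'a::comm_ring_1 \<Rightarrow> 'a \<Rightarrow> ('a \<times> 'a) set set" where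
  "Uset a b = {R \<in> divisibilities. (a, b) \<notin> R}"

definition Vset :: "'a::comm_ring_1 \<Rightarrow> 'a \<Rightarrow> ('a \<times> 'a) set set" where
  "Vset a b = {R \<in> divisibilities. (a, b) \<in> R}"

definition spectral_top :: "('a::comm_ring_1 \<times> 'a) set topology" where
  "spectral_top = topology_generated_by {Uset a b | a b. True}"

definition constructible_top :: "('a::comm_ring_1 \<times> 'a) set topology" where
  "constructible_top = topology_generated_by ({Uset a b | a b. True} \<union> {Vset a b | a b. True})"

end

theory Submission
  imports Defs
begin

abbreviation PT :: "('a \<Rightarrow> bool) topology" where
  "PT \<equiv> product_topology (\<lambda>_. discrete_topology (UNIV::bool set)) UNIV"

definition cl :: "'a \<Rightarrow> ('a \<Rightarrow> bool) set" where
  "cl x = {p. p x}"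

lemma topspace_PT: "topspace PT = UNIV"
  by (auto simp: PiE_def extensional_def)

lemma cl_open: "openin PT (cl x)"
proof -
  have "continuous_map PT (discrete_topology (UNIV::bool set)) (\<lambda>p. p x)"
    by (rule continuous_map_product_projection) auto
  from openin_continuous_map_preimage[OF this, of "{True}"]
  show ?thesis by (simp add: cl_def topspace_PT vimage_def)
qed

lemma cl_closed: "closedin PT (cl x)"
proof -
  have "continuous_map PT (discrete_topology (UNIV::bool set)) (\<lambda>p. p x)"
    by (rule continuous_map_product_projection) auto
  from closedin_continuous_map_preimage[OF this, of "{True}"]
  show ?thesis by (simp add: cl_def topspace_PT vimage_def)
qed

lemma ncl_closed: "closedin PT (UNIV - cl x)"
  using cl_open[of x] by (metis closedin_diff closedin_topspace topspace_PT)

lemma ncl_open: "openin PT (UNIV - cl x)"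
  using cl_closed[of x] by (metis openin_diff openin_topspace topspace_PT)

lemma PT_compact: "compact_space PT"
  by (simp add: compact_space_product_topology compact_space_discrete_topology)

definition Kset :: "('a::comm_ring_1 \<times> 'a \<Rightarrow> bool) set" where
  "Kset = {p. is_divisibility (Collect p)}"

lemma Kset_eq: "Kset =
   (\<Inter>a. cl (a,a)) \<inter>
   (\<Inter>(a,b,c). (UNIV - cl (a,b)) \<union> (UNIV - cl (b,c)) \<union> cl (a,c)) \<inter>
   (\<Inter>(a,b,c). (UNIV - cl (a,b)) \<union> (UNIV - cl (a,c)) \<union> cl (a,b-c)) \<inter>
   (\<Inter>(a,b,c). (UNIV - cl (a,b)) \<union> cl (a*c,b*c)) \<inter>
   (UNIV - cl (0,1))"
  unfolding Kset_def is_divisibility_def cl_def by (auto simp: mem_Collect_eq)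

lemma Kset_closed: "closedin PT (Kset :: ('a::comm_ring_1 \<times> 'a \<Rightarrow> bool) set)"
proof -
  have c1: "closedin PT (\<Inter>a. cl (a::'a,a))"
    by (rule closedin_Inter) (auto intro: cl_closed)
  have c2: "closedin PT (\<Inter>(a,b,c). (UNIV - cl (a::'a,b)) \<union> (UNIV - cl (b,c)) \<union> cl (a,c))"
    by (rule closedin_Inter) (auto intro!: closedin_Un cl_closed ncl_closed)
  have c3: "closedin PT (\<Inter>(a,b,c). (UNIV - cl (a::'a,b)) \<union> (UNIV - cl (a,c)) \<union> cl (a,b-c))"
    by (rule closedin_Inter) (auto intro!: closedin_Un cl_closed ncl_closed)
  have c4: "closedin PT (\<Inter>(a,b,c). (UNIV - cl (a::'a,b)) \<union> cl (a*c,b*c))"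
    by (rule closedin_Inter) (auto intro!: closedin_Un cl_closed ncl_closed)
  show ?thesis unfolding Kset_eq
    by (intro closedin_Int c1 c2 c3 c4 ncl_closed)
qed

lemma Kset_image: "Collect ` (Kset :: ('a::comm_ring_1 \<times> 'a \<Rightarrow> bool) set) = divisibilities"
proof
  show "Collect ` Kset \<subseteq> (divisibilities :: ('a \<times> 'a) set set)"
    unfolding Kset_def divisibilities_def by blast
  show "(divisibilities :: ('a \<times> 'a) set set) \<subseteq> Collect ` Kset"
  proof
    fix R :: "('a \<times> 'a) set" assume "R \<in> divisibilities"
    then have "(\<lambda>x. x \<in> R) \<in> Kset" "R = Collect (\<lambda>x. x \<in> R)"
      unfolding Kset_def divisibilities_def by simp_all
    then show "R \<in> Collect ` Kset" by blast
  qed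
qed

lemma Uset_sub: "Uset a b \<subseteq> divisibilities" and Vset_sub: "Vset a b \<subseteq> divisibilities"
  by (auto simp: Uset_def Vset_def)

lemma in_U01: "R \<in> divisibilities \<Longrightarrow> R \<in> Uset 0 1"
  by (auto simp: Uset_def divisibilities_def is_divisibility_def)

lemma top_con: "topspace (constructible_top :: ('a::comm_ring_1 \<times> 'a) set topology) = divisibilities"
proof -
  have "\<Union>({Uset a b |a b. True} \<union> {Vset (a::'a) b |a b. True}) = divisibilities"
  proof
    show "\<Union>({Uset a b |a b. True} \<union> {Vset (a::'a) b |a b. True}) \<subseteq> divisibilities"
      using Uset_sub Vset_sub by blast
    show "divisibilities \<subseteq> \<Union>({Uset a b |a b. True} \<union> {Vset (a::'a) b |a b. True})"
    proof
      fix R :: "('a \<times> 'a) set" assume "R \<in> divisibilities"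
      then have "R \<in> Uset 0 1" by (rule in_U01)
      then show "R \<in> \<Union>({Uset a b |a b. True} \<union> {Vset (a::'a) b |a b. True})" by blast
    qed
  qed
  then show ?thesis unfolding constructible_top_def topology_generated_by_topspace .
qed

lemma top_spec: "topspace (spectral_top :: ('a::comm_ring_1 \<times> 'a) set topology) = divisibilities"
proof -
  have "\<Union>({Uset (a::'a) b |a b. True}) = divisibilities"
  proof
    show "\<Union>({Uset (a::'a) b |a b. True}) \<subseteq> divisibilities"
      using Uset_sub by blast
    show "divisibilities \<subseteq> \<Union>({Uset (a::'a) b |a b. True})"
    proof
      fix R :: "('a \<times> 'a) set" assume "R \<in> divisibilities"
      then have "R \<in> Uset 0 1" by (rule in_U01)
      then show "R \<in> \<Union>({Uset (a::'a) b |a b. True})" by blast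
    qed
  qed
  then show ?thesis unfolding spectral_top_def topology_generated_by_topspace .
qed

lemma cont_g: "continuous_map (subtopology PT (Kset :: ('a::comm_ring_1 \<times> 'a \<Rightarrow> bool) set)) constructible_top Collect"
  unfolding constructible_top_def
proof (rule continuous_on_generated_topo)
  have tK: "topspace (subtopology PT Kset) = (Kset :: ('a \<times> 'a \<Rightarrow> bool) set)"
    by (simp add: topspace_PT)
  fix U assume "U \<in> {Uset a b |a b. True} \<union> {Vset (a::'a) b |a b. True}"
  then consider a b where "U = Uset a b" | a b where "U = Vset a b" by auto
  then show "openin (subtopology PT Kset) (Collect -` U \<inter> topspace (subtopology PT Kset))"
  proof cases
    case 1
    have "Collect -` U \<inter> Kset = (UNIV - cl (a,b)) \<inter> Kset"
      using 1 by (auto simp: Uset_def cl_def Kset_def divisibilities_def)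
    then show ?thesis unfolding tK openin_subtopology
      by (intro exI[of _ "UNIV - cl (a,b)"] conjI ncl_open)
  next
    case 2
    have "Collect -` U \<inter> Kset = cl (a,b) \<inter> Kset"
      using 2 by (auto simp: Vset_def cl_def Kset_def divisibilities_def)
    then show ?thesis unfolding tK openin_subtopology
      by (intro exI[of _ "cl (a,b)"] conjI cl_open)
  qed
next
  show "Collect ` topspace (subtopology PT Kset) \<subseteq> \<Union> ({Uset a b |a b. True} \<union> {Vset (a::'a) b |a b. True})"
  proof -
    have "Collect ` topspace (subtopology PT Kset) = (divisibilities :: ('a \<times> 'a) set set)"
      by (simp add: topspace_PT Kset_image)
    also have "\<dots> = \<Union> ({Uset a b |a b. True} \<union> {Vset (a::'a) b |a b. True})"
      using top_con[where 'a='a] unfolding constructible_top_def topology_generated_by_topspace by simp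
    finally show ?thesis by simp
  qed
qed

lemma con_compact: "compact_space (constructible_top :: ('a::comm_ring_1 \<times> 'a) set topology)"
proof -
  have "compactin PT (Kset :: ('a \<times> 'a \<Rightarrow> bool) set)"
    using closed_compactin[OF PT_compact[unfolded compact_space_def] _ Kset_closed]
    by (simp add: topspace_PT)
  then have "compact_space (subtopology PT (Kset :: ('a \<times> 'a \<Rightarrow> bool) set))"
    by (rule compact_space_subtopology)
  then have "compactin constructible_top (Collect ` topspace (subtopology PT (Kset :: ('a \<times> 'a \<Rightarrow> bool) set)))"
    using image_compactin cont_g compact_space_def by blast
  then show ?thesis
    by (simp add: compact_space_def top_con Kset_image topspace_PT)
qed

lemma con_haus: "Hausdorff_space (constructible_top :: ('a::comm_ring_1 \<times> 'a) set topology)"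
  unfolding Hausdorff_space_def top_con
proof (intro allI impI)
  fix R S :: "('a \<times> 'a) set"
  assume H: "R \<in> divisibilities \<and> S \<in> divisibilities \<and> R \<noteq> S"
  have o: "openin constructible_top (Uset a b)" "openin constructible_top (Vset a b)" for a b :: 'a
    unfolding constructible_top_def by (rule topology_generated_by_Basis, blast)+
  from H obtain p where "(p \<in> R \<and> p \<notin> S) \<or> (p \<notin> R \<and> p \<in> S)" by blast
  then show "\<exists>U V. openin constructible_top U \<and> openin constructible_top V \<and> R \<in> U \<and> S \<in> V \<and> disjnt U V"
  proof
    assume "p \<in> R \<and> p \<notin> S"
    then show ?thesis using H o[of "fst p" "snd p"]
      by (intro exI[of _ "Vset (fst p) (snd p)"] exI[of _ "Uset (fst p) (snd p)"])
         (auto simp: Uset_def Vset_def disjnt_def)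
  next
    assume "p \<notin> R \<and> p \<in> S"
    then show ?thesis using H o[of "fst p" "snd p"]
      by (intro exI[of _ "Uset (fst p) (snd p)"] exI[of _ "Vset (fst p) (snd p)"])
         (auto simp: Uset_def Vset_def disjnt_def)
  qed
qed

lemma spec_compact: "compact_space (spectral_top :: ('a::comm_ring_1 \<times> 'a) set topology)"
proof -
  have c: "continuous_map (constructible_top :: ('a \<times> 'a) set topology) spectral_top id"
    unfolding spectral_top_def
  proof (rule continuous_on_generated_topo)
    fix U :: "('a \<times> 'a) set set" assume "U \<in> {Uset a b |a b. True}"
    then obtain a b where U: "U = Uset a b" by blast
    have "id -` U \<inter> topspace constructible_top = Uset a b"
      using U Uset_sub top_con by auto
    then show "openin constructible_top (id -` U \<inter> topspace constructible_top)"
      unfolding constructible_top_def by (simp only:) (rule topology_generated_by_Basis, blast)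
  next
    show "id ` topspace constructible_top \<subseteq> \<Union> {Uset (a::'a) b |a b. True}"
      using top_con in_U01 by auto
  qed
  have "compactin spectral_top (id ` topspace (constructible_top :: ('a \<times> 'a) set topology))"
    using image_compactin[OF con_compact[unfolded compact_space_def] c] .
  then show ?thesis by (simp add: compact_space_def top_con top_spec)
qed

theorem lemma3p3:
  assumes "(1::'a::comm_ring_1) \<noteq> 0"
  shows "topspace (constructible_top :: ('a \<times> 'a) set topology) = divisibilities
       \<and> compact_space (constructible_top :: ('a \<times> 'a) set topology)
       \<and> Hausdorff_space (constructible_top :: ('a \<times> 'a) set topology)
       \<and> topspace (spectral_top :: ('a \<times> 'a) set topology) = divisibilities
       \<and> compact_space (spectral_top :: ('a \<times> 'a) set topology)"
  using top_con con_compact con_haus top_spec spec_compact by blast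

end
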